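(* Let $G=(V,E)$ be a finite graph and let $U$ be a random subset of $V$ obtained by including each vertex of $V$ independently with probability $1/2$. Then for any pair of distinct vertices $x,y\in V$, \[\mathbb{P}\big(\deg_{U}(x)=\deg_{U}(y)\big)<\frac{20}{\sqrt{\delta(x,y)+1}}.\]
   Context: All graphs are finite and simple. For a vertex $x$, $\Gamma(x)$ denotes its neighbourhood, and for $U\subset V$, $\deg_U(x)=|\Gamma(x)\cap U|$ (defined for every $x\in V$, whether or not $x\in U$). The neighbourhood-distance between two vertices $x,y$ is $\delta(x,y)=|(\Gamma(x)\setminus \{y\})\,\triangle\, (\Gamma(y)\setminus\{x\})|$, where $\triangle$ is symmetric difference. *)

theory Defs
  imports "HOL-Probability.Probability"
begin

definition simple_graph :: "'a set \<Rightarrow> ('a \<Rightarrow> 'a \<Rightarrow> bool) \<Rightarrow> bool" where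
  "simple_graph V E \<longleftrightarrow> finite V \<and> (\<forall>x y. E x y \<longrightarrow> E y x)
     \<and> (\<forall>x. \<not> E x x) \<and> (\<forall>x y. E x y \<longrightarrow> x \<in> V \<and> y \<in> V)"

definition nbhd :: "'a set \<Rightarrow> ('a \<Rightarrow> 'a \<Rightarrow> bool) \<Rightarrow> 'a \<Rightarrow> 'a set" where
  "nbhd V E x = {z \<in> V. E x z}"

definition deg_in :: "'a set \<Rightarrow> ('a \<Rightarrow> 'a \<Rightarrow> bool) \<Rightarrow> 'a set \<Rightarrow> 'a \<Rightarrow> nat" where
  "deg_in V E U x = card (nbhd V E x \<inter> U)"

definition nbhd_dist :: "'a set \<Rightarrow> ('a \<Rightarrow> 'a \<Rightarrow> bool) \<Rightarrow> 'a \<Rightarrow> 'a \<Rightarrow> nat" where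
  "nbhd_dist V E x y =
     (let A = nbhd V E x - {y}; B = nbhd V E y - {x} in card ((A - B) \<union> (B - A)))"

end

theory Submission
  imports Defs
begin

declare binomial_Suc_Suc[simp del]

lemma central_aux:
  "((2*m) choose m)^2 * (2*m+1) \<le> 16^m \<and> (m+1) * ((2*m+1) choose m) = (2*m+1) * ((2*m) choose m)"
proof (induction m)
  case 0 then show ?case by simp
next
  case (Suc m)
  define c where "c = (2*m) choose m"
  define bb where "bb = (2*m+1) choose m"
  have h1: "(m+1)*bb = (2*m+1)*c" using Suc c_def bb_def by simp
  have so: "bb = (2*m+1) choose (m+1)" unfolding bb_def
    using binomial_symmetric[of m "2*m+1"] by simp
  have c2: "(2*(m+1)) choose (m+1) = 2 * bb"
  proof -
    have "Suc m * (Suc (Suc (2*m)) choose Suc m) = Suc (Suc (2*m)) * (Suc (2*m) choose m)"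
      using Suc_times_binomial[of m "Suc (2*m)"] by simp
    hence "(m+1) * ((2*(m+1)) choose (m+1)) = (m+1) * (2*bb)" by (simp add: bb_def)
    thus ?thesis by (metis Suc_eq_plus1 nat.distinct(1) mult_left_cancel)
  qed
  have o2: "(m+2) * ((2*(m+1)+1) choose (m+1)) = (2*(m+1)+1) * ((2*(m+1)) choose (m+1))"
  proof -
    have "(2*(m+1)+1) choose (m+1) = (2*(m+1)+1) choose (m+2)"
      using binomial_symmetric[of "m+1" "2*(m+1)+1"] by simp
    moreover have "Suc (m+1) * (Suc (2*(m+1)) choose Suc (m+1)) = Suc (2*(m+1)) * ((2*(m+1)) choose (m+1))"
      by (rule Suc_times_binomial)
    ultimately show ?thesis by simp
  qed
  have ih: "c^2*(2*m+1) \<le> 16^m" using Suc c_def by simp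
  have "((m+1)^2) * ((2*(m+1) choose (m+1))^2 * (2*(m+1)+1)) = 4 * ((m+1)*bb)^2 * (2*m+3)"
    by (subst c2) (simp add: power2_eq_square algebra_simps)
  also have "\<dots> = 4 * ((2*m+1)*c)^2 * (2*m+3)" using h1 by simp
  also have "\<dots> = 4 * (c^2 * (2*m+1)) * ((2*m+1)*(2*m+3))" by (simp add: power2_eq_square algebra_simps)
  also have "\<dots> \<le> 4 * 16^m * (4*(m+1)^2)"
  proof -
    have q: "(2*m+1)*(2*m+3) \<le> 4*(m+1)^2" by (simp add: power2_eq_square algebra_simps)
    show ?thesis by (rule mult_mono[OF _ q]) (use ih in auto)
  qed
  also have "\<dots> = (m+1)^2 * 16^(Suc m)" by simp
  finally have "(m+1)^2 * ((2*(m+1) choose (m+1))^2 * (2*(m+1)+1)) \<le> (m+1)^2 * 16^(Suc m)" .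
  hence A: "(2*(m+1) choose (m+1))^2 * (2*(m+1)+1) \<le> 16^(Suc m)" by simp
  show ?case using A o2 by (simp add: algebra_simps)
qed

lemma central_bound: "((d choose (d div 2))^2) * (d+1) \<le> 4 * 4^d"
proof (cases "even d")
  case True
  then obtain m where d: "d = 2*m" by auto
  have "(d choose (d div 2))^2 * (d+1) \<le> 16^m" using central_aux[of m] d by simp
  also have "\<dots> = 4^d" by (simp add: d power_mult)
  finally show ?thesis by simp
next
  case False
  then obtain m where d: "d = 2*m+1" by (metis oddE)
  have A: "(m+1) * (d choose (d div 2)) = (2*m+1) * ((2*m) choose m)" using central_aux[of m] d by simp
  have B: "((2*m) choose m)^2 * (2*m+1) \<le> 16^m" using central_aux[of m] by simp
  define e where "e = d choose (d div 2)"
  define c where "c = (2*m) choose m"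
  have A': "(m+1)*e = (2*m+1)*c" using A e_def c_def by simp
  have "((m+1)^2) * ((d choose (d div 2))^2 * (d+1)) = ((m+1)*e)^2 * (2*m+2)"
    unfolding e_def[symmetric] using d by (simp add: power2_eq_square algebra_simps)
  also have "\<dots> = ((2*m+1)*c)^2 * (2*m+2)" using A' by simp
  also have "\<dots> = (c^2 * (2*m+1)) * ((2*m+1)*(2*m+2))" by (simp add: power2_eq_square algebra_simps)
  also have "\<dots> \<le> 16^m * ((m+1)^2 * 4)"
  proof -
    have q: "(2*m+1)*(2*m+2) \<le> (m+1)^2*4" by (simp add: power2_eq_square algebra_simps)
    show ?thesis by (rule mult_mono[OF B[folded c_def] q]) auto
  qed
  finally have "(m+1)^2 * ((d choose (d div 2))^2 * (d+1)) \<le> (m+1)^2 * (4 * 16^m)" by (simp add: algebra_simps)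
  hence "(d choose (d div 2))^2 * (d+1) \<le> 4 * 16^m" by simp
  also have "\<dots> \<le> 4 * 4^d" by (simp add: d power_mult)
  finally show ?thesis .
qed

lemma real_bound: "real (d choose (d div 2)) / 2^d < 20 / sqrt (real d + 1)"
proof -
  define c where "c = real (d choose (d div 2))"
  have "real ((d choose (d div 2))^2 * (d+1)) \<le> real (4 * 4^d)"
    using central_bound[of d] by (simp only: of_nat_le_iff)
  hence h: "c^2 * (real d + 1) \<le> 4 * 4^d" unfolding c_def by (simp add: algebra_simps)
  have "(c * sqrt (real d + 1))^2 = c^2 * (real d + 1)" by (simp add: power_mult_distrib)
  also have "(4::real) * 4^d = (2 * 2^d)^2"
  proof -
    have "(2::real)^d * 2^d = 4^d" by (simp flip: power_mult_distrib)
    thus ?thesis by (simp add: power2_eq_square algebra_simps)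
  qed
  ultimately have "(c * sqrt (real d + 1))^2 \<le> (2 * 2^d)^2" using h by simp
  hence "c * sqrt (real d + 1) \<le> 2 * 2^d"
    by (rule power2_le_imp_le) simp
  moreover have "(2::real) * 2^d < 20 * 2^d" by simp
  ultimately have l: "c * sqrt (real d + 1) < 20 * 2^d" by linarith
  have p: "sqrt (real d + 1) > 0" by simp
  show ?thesis unfolding c_def[symmetric] using l p
    by (simp add: field_simps)
qed

theorem lemma3p1:
  fixes V :: "'a set" and E :: "'a \<Rightarrow> 'a \<Rightarrow> bool" and x y :: 'a
  assumes "simple_graph V E" and "x \<in> V" and "y \<in> V" and "x \<noteq> y"
  shows "measure_pmf.prob (pmf_of_set (Pow V)) {U. deg_in V E U x = deg_in V E U y}
           < 20 / sqrt (real (nbhd_dist V E x y) + 1)"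
proof -
  have finV: "finite V" and irr: "\<And>z. \<not> E z z" using assms(1) unfolding simple_graph_def by auto
  define N where "N = nbhd V E"
  define A where "A = N x - {y}"
  define B where "B = N y - {x}"
  define D where "D = A - B"
  define D' where "D' = B - A"
  define S where "S = D \<union> D'"
  define R where "R = V - S"
  have NV: "\<And>z. N z \<subseteq> V" unfolding N_def nbhd_def by auto
  have SV: "S \<subseteq> V" unfolding S_def D_def D'_def A_def B_def using NV by blast
  have finS: "finite S" using SV finV finite_subset by blast
  have finR: "finite R" using finV R_def by simp
  have DD: "D \<inter> D' = {}" unfolding D_def D'_def by blast
  have finD: "finite D" "finite D'" using finS S_def by auto
  have dist: "nbhd_dist V E x y = card S"
    unfolding nbhd_dist_def S_def D_def D'_def A_def B_def N_def Let_def by simp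
  have yNy: "y \<notin> N y" unfolding N_def nbhd_def using irr by auto
  have Nx: "N x \<inter> T = D \<inter> T" if "T \<subseteq> S" for T
    using that yNy unfolding S_def D_def D'_def A_def B_def by blast
  have xNx: "x \<notin> N x" unfolding N_def nbhd_def using irr by auto
  have Ny: "N y \<inter> T = D' \<inter> T" if "T \<subseteq> S" for T
    using that xNx unfolding S_def D_def D'_def A_def B_def by blast
  define g where "g T = (D \<inter> T) \<union> (D' - T)" for T
  define a where "a W = card (N x \<inter> W)" for W
  define b where "b W = card (N y \<inter> W)" for W
  define F where "F W = {T \<in> Pow S. a W + card (g T) = b W + card D'}" for W
  define C where "C = card S choose (card S div 2)"
  have finN: "\<And>z W. finite (N z \<inter> W)" using NV finV finite_subset by blast
  have key: "deg_in V E (W \<union> T) x = deg_in V E (W \<union> T) y \<longleftrightarrow> a W + card (g T) = b W + card D'"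
    if W: "W \<subseteq> R" and T: "T \<subseteq> S" for W T
  proof -
    have WT: "W \<inter> T = {}" using W T R_def by blast
    have dx: "deg_in V E (W \<union> T) x = a W + card (D \<inter> T)"
    proof -
      have "N x \<inter> (W \<union> T) = (N x \<inter> W) \<union> (D \<inter> T)" using Nx[OF T] by blast
      moreover have "card ((N x \<inter> W) \<union> (D \<inter> T)) = card (N x \<inter> W) + card (D \<inter> T)"
        by (rule card_Un_disjoint) (use finN finD WT in auto)
      ultimately show ?thesis unfolding deg_in_def a_def N_def by simp
    qed
    have dy: "deg_in V E (W \<union> T) y = b W + card (D' \<inter> T)"
    proof -
      have "N y \<inter> (W \<union> T) = (N y \<inter> W) \<union> (D' \<inter> T)" using Ny[OF T] by blast
      moreover have "card ((N y \<inter> W) \<union> (D' \<inter> T)) = card (N y \<inter> W) + card (D' \<inter> T)"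
        by (rule card_Un_disjoint) (use finN finD WT in auto)
      ultimately show ?thesis unfolding deg_in_def b_def N_def by simp
    qed
    have g1: "card (g T) = card (D \<inter> T) + card (D' - T)"
      unfolding g_def by (rule card_Un_disjoint) (use finD DD in auto)
    have g2: "card D' = card (D' \<inter> T) + card (D' - T)"
    proof -
      have "D' = (D' \<inter> T) \<union> (D' - T)" by blast
      hence "card D' = card ((D' \<inter> T) \<union> (D' - T))" by simp
      also have "\<dots> = card (D' \<inter> T) + card (D' - T)"
        by (rule card_Un_disjoint) (use finD in auto)
      finally show ?thesis .
    qed
    show ?thesis using dx dy g1 g2 by linarith
  qed
  have cover: "Pow V \<inter> {U. deg_in V E U x = deg_in V E U y} \<subseteq> (\<Union>W\<in>Pow R. (\<lambda>T. W \<union> T) ` F W)"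
  proof
    fix U assume U: "U \<in> Pow V \<inter> {U. deg_in V E U x = deg_in V E U y}"
    define W where "W = U \<inter> R"
    define T where "T = U \<inter> S"
    have UWT: "U = W \<union> T" using U SV unfolding W_def T_def R_def by blast
    have "T \<in> F W" unfolding F_def using key[of W T] U UWT unfolding W_def T_def by auto
    thus "U \<in> (\<Union>W\<in>Pow R. (\<lambda>T. W \<union> T) ` F W)" using UWT W_def by blast
  qed
  have inv: "T = (g T \<inter> D) \<union> (D' - g T)" if "T \<subseteq> S" for T
    using that DD unfolding g_def S_def by blast
  have FC: "card (F W) \<le> C" for W
  proof -
    have inj: "inj_on g (F W)"
    proof (rule inj_onI)
      fix T1 T2 assume "T1 \<in> F W" "T2 \<in> F W" "g T1 = g T2"
      thus "T1 = T2" using inv[of T1] inv[of T2] unfolding F_def by auto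
    qed
    have sub: "g ` F W \<subseteq> {T'. T' \<subseteq> S \<and> card T' = b W + card D' - a W}"
      unfolding F_def g_def S_def by auto
    have "card (F W) = card (g ` F W)" using card_image[OF inj] by simp
    also have "\<dots> \<le> card {T'. T' \<subseteq> S \<and> card T' = b W + card D' - a W}"
      by (rule card_mono) (use finS sub in auto)
    also have "\<dots> = card S choose (b W + card D' - a W)" using n_subsets[OF finS] by simp
    also have "\<dots> \<le> C" unfolding C_def by (rule binomial_maximum)
    finally show ?thesis .
  qed
  have finF: "finite (F W)" for W unfolding F_def using finS by simp
  have "card (Pow V \<inter> {U. deg_in V E U x = deg_in V E U y}) \<le> card (\<Union>W\<in>Pow R. (\<lambda>T. W \<union> T) ` F W)"
    by (rule card_mono[OF _ cover]) (use finR finF in auto)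
  also have "\<dots> \<le> (\<Sum>W\<in>Pow R. card ((\<lambda>T. W \<union> T) ` F W))"
    by (rule card_UN_le) (use finR in auto)
  also have "\<dots> \<le> (\<Sum>W\<in>Pow R. C)"
    by (rule sum_mono) (use card_image_le[OF finF] FC order_trans in blast)
  also have "\<dots> = 2 ^ card R * C" using card_Pow[OF finR] by simp
  finally have cnt: "card (Pow V \<inter> {U. deg_in V E U x = deg_in V E U y}) \<le> 2 ^ card R * C" .
  have cV: "card V = card R + card S"
    unfolding R_def using card_Diff_subset[OF finS SV] card_mono[OF finV SV] by simp
  have "measure_pmf.prob (pmf_of_set (Pow V)) {U. deg_in V E U x = deg_in V E U y}
      = card (Pow V \<inter> {U. deg_in V E U x = deg_in V E U y}) / card (Pow V)"
    by (rule measure_pmf_of_set) (use finV in auto)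
  also have "\<dots> \<le> real (2 ^ card R * C) / 2 ^ card V"
  proof -
    have "real (card (Pow V \<inter> {U. deg_in V E U x = deg_in V E U y})) \<le> real (2 ^ card R * C)"
      using cnt by (simp only: of_nat_le_iff)
    moreover have "real (card (Pow V)) = 2 ^ card V" using card_Pow[OF finV] by simp
    ultimately show ?thesis by (metis divide_right_mono zero_le_power zero_le_numeral)
  qed
  also have "\<dots> = real C / 2 ^ card S" unfolding cV by (simp add: power_add)
  also have "\<dots> < 20 / sqrt (real (nbhd_dist V E x y) + 1)"
    unfolding dist C_def by (rule real_bound)
  finally show ?thesis .
qed

end
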